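(* Let $t\ge 3$ be an integer. Then, as $n\to\infty$, $$ex_3(n,Tr(K_{2,t}))\le \left(\frac{\sqrt{3(3t-1)}\,(t-1)}{3}+\frac{\sqrt{t-1}}{2}\right)n^{3/2}+o(n^{3/2}).$$
   Context: For a graph $F$ with vertex set $\{v_1,\dots,v_p\}$ and edge set $\{e_1,\dots,e_q\}$, a hypergraph $\mathcal{H}$ contains $F$ as a trace if there exist distinct vertices $w_1,\dots,w_p\in V(\mathcal{H})$ and distinct edges $f_1,\dots,f_q\in E(\mathcal{H})$ such that whenever $e_i=v_\alpha v_\beta$, we have $f_i\cap\{w_1,\dots,w_p\}=\{w_\alpha,w_\beta\}$. $ex_3(n,Tr(F))$ denotes the maximum number of edges of an $n$-vertex $3$-uniform hypergraph that does not contain $F$ as a trace. $K_{2,t}$ is the complete bipartite graph with parts of sizes $2$ and $t$. *)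

theory Defs
  imports "HOL-Analysis.Analysis"
begin

text \<open>A graph F is given by a finite vertex set VF and a set EF of edges, each edge a
  2-element subset of VF.\<close>

definition contains_trace ::
  "'a set \<Rightarrow> 'a set set \<Rightarrow> 'v set \<Rightarrow> 'v set set \<Rightarrow> bool" where
  "contains_trace V E VF EF \<longleftrightarrow>
     (\<exists>w f. inj_on w VF \<and> w ` VF \<subseteq> V \<and> inj_on f EF \<and> f ` EF \<subseteq> E \<and>
        (\<forall>e\<in>EF. f e \<inter> w ` VF = w ` e))"

definition K2t_vertices :: "nat \<Rightarrow> (nat + nat) set" where
  "K2t_vertices t = Inl ` {0..<2} \<union> Inr ` {0..<t}"

definition K2t_edges :: "nat \<Rightarrow> (nat + nat) set set" where
  "K2t_edges t = {{Inl i, Inr j} | i j. i < 2 \<and> j < t}"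

definition uniform3 :: "nat \<Rightarrow> nat set set \<Rightarrow> bool" where
  "uniform3 n E \<longleftrightarrow> (\<forall>e\<in>E. e \<subseteq> {0..<n} \<and> card e = 3)"

definition ex3_trace :: "nat \<Rightarrow> 'v set \<Rightarrow> 'v set set \<Rightarrow> nat" where
  "ex3_trace n VF EF =
     Max {card E | E. uniform3 n E \<and> \<not> contains_trace {0..<n} E VF EF}"

end

theory Submission
  imports Defs
begin


lemma sum_card_swap:
  assumes "finite A" "finite B"
  shows "(\<Sum>x\<in>A. card {y\<in>B. P x y}) = (\<Sum>y\<in>B. card {x\<in>A. P x y})"
proof -
  have "(\<Sum>x\<in>A. card {y\<in>B. P x y}) = (\<Sum>x\<in>A. \<Sum>y\<in>B. if P x y then 1 else 0)"
    using assms by (simp add: sum.If_cases Int_def)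
  also have "\<dots> = (\<Sum>y\<in>B. \<Sum>x\<in>A. if P x y then 1 else 0)" by (rule sum.swap)
  also have "\<dots> = (\<Sum>y\<in>B. card {x\<in>A. P x y})"
    using assms by (simp add: sum.If_cases Int_def)
  finally show ?thesis .
qed

lemma min_cover:
  assumes fin: "finite C" and sym: "\<And>a b. R a b \<Longrightarrow> R b a" and irr: "\<And>a. \<not> R a a"
    and nb: "\<And>c. c \<in> C \<Longrightarrow> \<exists>x. R c x"
  shows "\<exists>F. finite F \<and> (\<forall>e\<in>F. \<exists>a b. e = {a,b} \<and> R a b) \<and> (\<forall>c\<in>C. \<exists>e\<in>F. c \<in> e)
     \<and> (\<forall>e\<in>F. \<exists>c\<in>e. c \<in> C \<and> (\<forall>e'\<in>F. c \<in> e' \<longrightarrow> e' = e))"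
proof -
  define q where "q c = (SOME x. R c x)" for c
  have q: "c \<in> C \<Longrightarrow> R c (q c)" for c using nb someI_ex unfolding q_def by metis
  define Cand where "Cand = (\<lambda>c. {c, q c}) ` C"
  define P where "P F \<longleftrightarrow> F \<subseteq> Cand \<and> (\<forall>c\<in>C. \<exists>e\<in>F. c \<in> e)" for F
  have "P Cand" by (auto simp: P_def Cand_def)
  then obtain F where PF: "P F" and minF: "\<And>F'. P F' \<Longrightarrow> card F \<le> card F'"
    using ex_has_least_nat[of P Cand card] by blast
  have finF: "finite F" using PF fin by (auto simp: P_def Cand_def intro: finite_subset)
  show ?thesis
  proof (rule exI[of _ F], intro conjI ballI)
    show "finite F" by (fact finF)
  next
    fix e assume "e \<in> F"
    then have "e \<in> Cand" using PF by (auto simp: P_def)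
    then show "\<exists>a b. e = {a,b} \<and> R a b" using q by (auto simp: Cand_def)
  next
    fix c assume "c \<in> C" then show "\<exists>e\<in>F. c \<in> e" using PF by (auto simp: P_def)
  next
    fix e assume eF: "e \<in> F"
    show "\<exists>c\<in>e. c \<in> C \<and> (\<forall>e'\<in>F. c \<in> e' \<longrightarrow> e' = e)"
    proof (rule ccontr)
      assume H: "\<not> ?thesis"
      have "P (F - {e})"
        unfolding P_def
      proof (intro conjI ballI)
        show "F - {e} \<subseteq> Cand" using PF by (auto simp: P_def)
      next
        fix c assume cC: "c \<in> C"
        then obtain e' where "e' \<in> F" "c \<in> e'" using PF by (auto simp: P_def)
        then show "\<exists>e\<in>F - {e}. c \<in> e" using H cC by blast
      qed
      then have "card F \<le> card (F - {e})" by (rule minF)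
      moreover have "card (F - {e}) < card F" using finF eF by (rule card_Diff1_less)
      ultimately show False by simp
    qed
  qed
qed

lemma fam_count:
  assumes finS: "finite S" and two: "\<And>e. e \<in> F \<Longrightarrow> card e = 2"
    and priv: "\<And>e. e \<in> F \<Longrightarrow> \<exists>c\<in>e. \<forall>e'\<in>F. c \<in> e' \<longrightarrow> e' = e"
  shows "(\<Sum>x\<in>S. card {e\<in>F. e \<subseteq> S \<and> x \<in> e}) = 2 * card {e\<in>F. e \<subseteq> S}"
    and "card {e\<in>F. e \<subseteq> S} \<le> card {x\<in>S. card {e\<in>F. e \<subseteq> S \<and> x \<in> e} \<le> 1}"
proof -
  define FS where "FS = {e\<in>F. e \<subseteq> S}"
  have finFS: "finite FS" unfolding FS_def
    by (rule finite_subset[of _ "Pow S"]) (use finS in auto)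
  have "(\<Sum>x\<in>S. card {e\<in>F. e \<subseteq> S \<and> x \<in> e}) = (\<Sum>x\<in>S. card {e\<in>FS. x \<in> e})"
    unfolding FS_def by (intro sum.cong refl arg_cong[where f=card]) auto
  also have "\<dots> = (\<Sum>e\<in>FS. card {x\<in>S. x \<in> e})" by (rule sum_card_swap[OF finS finFS])
  also have "\<dots> = (\<Sum>e\<in>FS. 2)"
  proof (rule sum.cong[OF refl])
    fix e assume "e \<in> FS"
    then have "{x\<in>S. x \<in> e} = e" "card e = 2" using two unfolding FS_def by auto
    then show "card {x\<in>S. x \<in> e} = 2" by simp
  qed
  also have "\<dots> = 2 * card FS" by simp
  finally show "(\<Sum>x\<in>S. card {e\<in>F. e \<subseteq> S \<and> x \<in> e}) = 2 * card {e\<in>F. e \<subseteq> S}"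
    unfolding FS_def .
  define p where "p e = (SOME c. c \<in> e \<and> (\<forall>e'\<in>F. c \<in> e' \<longrightarrow> e' = e))" for e
  have p: "p e \<in> e \<and> (\<forall>e'\<in>F. p e \<in> e' \<longrightarrow> e' = e)" if "e \<in> F" for e
  proof -
    have ex: "\<exists>c. c \<in> e \<and> (\<forall>e'\<in>F. c \<in> e' \<longrightarrow> e' = e)" using priv[OF that] by blast
    show ?thesis unfolding p_def by (rule someI_ex[OF ex])
  qed
  have "card FS \<le> card {x\<in>S. card {e\<in>F. e \<subseteq> S \<and> x \<in> e} \<le> 1}"
  proof (rule card_inj_on_le[of p])
    show "inj_on p FS"
    proof (rule inj_onI)
      fix e1 e2 assume e1: "e1 \<in> FS" and e2: "e2 \<in> FS" and eq: "p e1 = p e2"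
      have "e1 \<in> F" "e2 \<in> F" using e1 e2 unfolding FS_def by auto
      have "p e1 \<in> e2" using eq p[OF \<open>e2 \<in> F\<close>] by simp
      then show "e1 = e2" using p[OF \<open>e1 \<in> F\<close>] \<open>e2 \<in> F\<close> by blast
    qed
    show "finite {x\<in>S. card {e\<in>F. e \<subseteq> S \<and> x \<in> e} \<le> 1}" using finS by simp
    show "p ` FS \<subseteq> {x\<in>S. card {e\<in>F. e \<subseteq> S \<and> x \<in> e} \<le> 1}"
    proof
      fix x assume "x \<in> p ` FS"
      then obtain e where eFS: "e \<in> FS" and x: "x = p e" by auto
      have eF: "e \<in> F" and eS: "e \<subseteq> S" using eFS unfolding FS_def by auto
      note pe = p[OF eF]
      have "{e'\<in>F. e' \<subseteq> S \<and> x \<in> e'} \<subseteq> {e}" using pe unfolding x by blast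
      then have "card {e'\<in>F. e' \<subseteq> S \<and> x \<in> e'} \<le> card {e}" by (intro card_mono) auto
      then have "card {e'\<in>F. e' \<subseteq> S \<and> x \<in> e'} \<le> 1" by simp
      moreover have "x \<in> S" using pe eS unfolding x by blast
      ultimately show "x \<in> {x\<in>S. card {e\<in>F. e \<subseteq> S \<and> x \<in> e} \<le> 1}" by simp
    qed
  qed
  then show "card {e\<in>F. e \<subseteq> S} \<le> card {x\<in>S. card {e\<in>F. e \<subseteq> S \<and> x \<in> e} \<le> 1}"
    unfolding FS_def .
qed

lemma degen:
  assumes finS: "finite S" and ne: "S \<noteq> {}"
    and two1: "\<And>e. e \<in> F1 \<Longrightarrow> card e = 2"
    and priv1: "\<And>e. e \<in> F1 \<Longrightarrow> \<exists>c\<in>e. \<forall>e'\<in>F1. c \<in> e' \<longrightarrow> e' = e"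
    and two2: "\<And>e. e \<in> F2 \<Longrightarrow> card e = 2"
    and priv2: "\<And>e. e \<in> F2 \<Longrightarrow> \<exists>c\<in>e. \<forall>e'\<in>F2. c \<in> e' \<longrightarrow> e' = e"
  shows "\<exists>x\<in>S. card {e\<in>F1. e \<subseteq> S \<and> x \<in> e} + card {e\<in>F2. e \<subseteq> S \<and> x \<in> e} \<le> 2"
proof (rule ccontr)
  assume H: "\<not> ?thesis"
  define d1 where "d1 x = card {e\<in>F1. e \<subseteq> S \<and> x \<in> e}" for x
  define d2 where "d2 x = card {e\<in>F2. e \<subseteq> S \<and> x \<in> e}" for x
  have H': "x \<in> S \<Longrightarrow> 3 \<le> d1 x + d2 x" for x using H unfolding d1_def d2_def by force
  note c1 = fam_count[OF finS two1 priv1, folded d1_def]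
  note c2 = fam_count[OF finS two2 priv2, folded d2_def]
  define A1 where "A1 = {x\<in>S. d1 x \<le> 1}"
  define A2 where "A2 = {x\<in>S. d2 x \<le> 1}"
  have "A1 \<inter> A2 = {}" using H' unfolding A1_def A2_def by force
  then have "card A1 + card A2 = card (A1 \<union> A2)"
    using finS by (simp add: A1_def A2_def card_Un_disjoint)
  also have "\<dots> \<le> card S" using finS by (intro card_mono) (auto simp: A1_def A2_def)
  finally have A: "card A1 + card A2 \<le> card S" .
  have "3 * card S = (\<Sum>x\<in>S. 3)" by simp
  also have "\<dots> \<le> (\<Sum>x\<in>S. d1 x + d2 x)" by (rule sum_mono) (use H' in auto)
  also have "\<dots> = 2 * card {e\<in>F1. e \<subseteq> S} + 2 * card {e\<in>F2. e \<subseteq> S}"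
    using c1(1) c2(1) by (simp add: sum.distrib)
  also have "\<dots> \<le> 2 * card A1 + 2 * card A2" using c1(2) c2(2) unfolding A1_def A2_def by simp
  finally have "3 * card S \<le> 2 * card S" using A by linarith
  moreover have "card S > 0" using finS ne by (simp add: card_gt_0_iff)
  ultimately show False by simp
qed

lemma indep:
  assumes finC: "finite C"
    and two1: "\<And>e. e \<in> F1 \<Longrightarrow> card e = 2"
    and priv1: "\<And>e. e \<in> F1 \<Longrightarrow> \<exists>c\<in>e. \<forall>e'\<in>F1. c \<in> e' \<longrightarrow> e' = e"
    and two2: "\<And>e. e \<in> F2 \<Longrightarrow> card e = 2"
    and priv2: "\<And>e. e \<in> F2 \<Longrightarrow> \<exists>c\<in>e. \<forall>e'\<in>F2. c \<in> e' \<longrightarrow> e' = e"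
  shows "S \<subseteq> C \<Longrightarrow> \<exists>W\<subseteq>S. card S \<le> 3 * card W \<and> (\<forall>e\<in>F1 \<union> F2. \<not> e \<subseteq> W)"
proof (induction "card S" arbitrary: S rule: less_induct)
  case less
  have finS: "finite S" using less.prems finC finite_subset by blast
  show ?case
  proof (cases "S = {}")
    case True
    have "\<not> e \<subseteq> {}" if "e \<in> F1 \<union> F2" for e
    proof -
      have "card e = 2" using that two1 two2 by blast
      then show ?thesis by auto
    qed
    then show ?thesis using True by (intro exI[of _ "{}"]) simp
  next
    case False
    obtain x where xS: "x \<in> S" and
      dx: "card {e\<in>F1. e \<subseteq> S \<and> x \<in> e} + card {e\<in>F2. e \<subseteq> S \<and> x \<in> e} \<le> 2"
      using degen[OF finS False two1 priv1 two2 priv2] by blast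
    define Nb where "Nb = {y\<in>S. {x,y} \<in> F1 \<or> {x,y} \<in> F2}"
    have "card Nb \<le> card ({e\<in>F1. e \<subseteq> S \<and> x \<in> e} \<union> {e\<in>F2. e \<subseteq> S \<and> x \<in> e})"
    proof (rule card_inj_on_le[of "\<lambda>y. {x,y}"])
      show "inj_on (\<lambda>y. {x, y}) Nb"
      proof (rule inj_onI)
        fix y z assume "y \<in> Nb" "z \<in> Nb" "{x,y} = {x,z}"
        moreover have "y \<noteq> x" using \<open>y \<in> Nb\<close> two1 two2 unfolding Nb_def by fastforce
        ultimately show "y = z" by (metis doubleton_eq_iff)
      qed
      show "(\<lambda>y. {x, y}) ` Nb \<subseteq> {e\<in>F1. e \<subseteq> S \<and> x \<in> e} \<union> {e\<in>F2. e \<subseteq> S \<and> x \<in> e}"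
        using xS unfolding Nb_def by auto
      show "finite ({e\<in>F1. e \<subseteq> S \<and> x \<in> e} \<union> {e\<in>F2. e \<subseteq> S \<and> x \<in> e})"
        by (rule finite_subset[of _ "Pow S"]) (use finS in auto)
    qed
    also have "\<dots> \<le> 2" using dx by (meson card_Un_le le_trans)
    finally have cNb: "card Nb \<le> 2" .
    define S' where "S' = S - insert x Nb"
    have finNb: "finite Nb" using finS unfolding Nb_def by simp
    have "card (insert x Nb) \<le> Suc (card Nb)" using finNb by (simp add: card_insert_if)
    then have "card (insert x Nb) \<le> 3" using cNb by linarith
    have cS': "card S' = card S - card (insert x Nb)"
      unfolding S'_def using finS xS by (intro card_Diff_subset) (auto simp: Nb_def finNb)
    have lt: "card S' < card S" unfolding S'_def using finS xS
      by (intro psubset_card_mono) auto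
    obtain W' where W': "W' \<subseteq> S'" "card S' \<le> 3 * card W'" "\<forall>e\<in>F1 \<union> F2. \<not> e \<subseteq> W'"
      using less.hyps[OF lt] less.prems unfolding S'_def by blast
    have xW': "x \<notin> W'" using W' unfolding S'_def by auto
    have finW': "finite W'" using W'(1) finS unfolding S'_def using finite_subset by blast
    show ?thesis
    proof (intro exI conjI ballI)
      show "insert x W' \<subseteq> S" using W' xS unfolding S'_def by auto
      have "card (insert x W') = card W' + 1" using xW' finW' by simp
      moreover have "card S \<le> card S' + 3" using cS' \<open>card (insert x Nb) \<le> 3\<close> by linarith
      ultimately show "card S \<le> 3 * card (insert x W')" using W'(2) by linarith
    next
      fix e assume eF: "e \<in> F1 \<union> F2"
      show "\<not> e \<subseteq> insert x W'"
      proof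
        assume sub: "e \<subseteq> insert x W'"
        have "card e = 2" using eF two1 two2 by blast
        then obtain a b where eab: "e = {a,b}" "a \<noteq> b" by (meson card_2_iff)
        show False
        proof (cases "x \<in> e")
          case False then have "e \<subseteq> W'" using sub by auto
          then show False using W'(3) eF by blast
        next
          case True
          then obtain y where ey: "e = {x,y}" "y \<noteq> x" using eab by auto
          then have "y \<in> W'" using sub by auto
          then have "y \<in> S" using W'(1) unfolding S'_def by auto
          then have "y \<in> Nb" using eF ey unfolding Nb_def by auto
          then show False using \<open>y \<in> W'\<close> W'(1) unfolding S'_def by auto
        qed
      qed
    qed
  qed
qed

lemma select:
  assumes fin: "finite C"
    and sym1: "\<And>a b. R1 a b \<Longrightarrow> R1 b a" and irr1: "\<And>a. \<not> R1 a a"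
    and nb1: "\<And>c. c \<in> C \<Longrightarrow> \<exists>x. R1 c x"
    and sym2: "\<And>a b. R2 a b \<Longrightarrow> R2 b a" and irr2: "\<And>a. \<not> R2 a a"
    and nb2: "\<And>c. c \<in> C \<Longrightarrow> \<exists>x. R2 c x"
  shows "\<exists>W\<subseteq>C. card C \<le> 3 * card W \<and> (\<forall>w\<in>W. \<exists>x. R1 w x \<and> x \<notin> W)
           \<and> (\<forall>w\<in>W. \<exists>x. R2 w x \<and> x \<notin> W)"
proof -
  from min_cover[OF fin sym1 irr1 nb1] obtain F1 where F1all: "finite F1 \<and> (\<forall>e\<in>F1. \<exists>a b. e = {a,b} \<and> R1 a b) \<and> (\<forall>c\<in>C. \<exists>e\<in>F1. c \<in> e)
     \<and> (\<forall>e\<in>F1. \<exists>c\<in>e. c \<in> C \<and> (\<forall>e'\<in>F1. c \<in> e' \<longrightarrow> e' = e))" ..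
  have F1: "finite F1" "\<forall>e\<in>F1. \<exists>a b. e = {a,b} \<and> R1 a b" "\<forall>c\<in>C. \<exists>e\<in>F1. c \<in> e"
     "\<forall>e\<in>F1. \<exists>c\<in>e. c \<in> C \<and> (\<forall>e'\<in>F1. c \<in> e' \<longrightarrow> e' = e)"
    using F1all[THEN conjunct1] F1all[THEN conjunct2, THEN conjunct1]
      F1all[THEN conjunct2, THEN conjunct2, THEN conjunct1] F1all[THEN conjunct2, THEN conjunct2, THEN conjunct2]
    by - assumption+
  from min_cover[OF fin sym2 irr2 nb2] obtain F2 where F2all: "finite F2 \<and> (\<forall>e\<in>F2. \<exists>a b. e = {a,b} \<and> R2 a b) \<and> (\<forall>c\<in>C. \<exists>e\<in>F2. c \<in> e)
     \<and> (\<forall>e\<in>F2. \<exists>c\<in>e. c \<in> C \<and> (\<forall>e'\<in>F2. c \<in> e' \<longrightarrow> e' = e))" ..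
  have F2: "finite F2" "\<forall>e\<in>F2. \<exists>a b. e = {a,b} \<and> R2 a b" "\<forall>c\<in>C. \<exists>e\<in>F2. c \<in> e"
     "\<forall>e\<in>F2. \<exists>c\<in>e. c \<in> C \<and> (\<forall>e'\<in>F2. c \<in> e' \<longrightarrow> e' = e)"
    using F2all[THEN conjunct1] F2all[THEN conjunct2, THEN conjunct1]
      F2all[THEN conjunct2, THEN conjunct2, THEN conjunct1] F2all[THEN conjunct2, THEN conjunct2, THEN conjunct2]
    by - assumption+
  have two1: "card e = 2" if eF: "e \<in> F1" for e
  proof -
    obtain a b where "e = {a,b}" "R1 a b" using F1(2) eF by blast
    moreover have "a \<noteq> b" using irr1 \<open>R1 a b\<close> by blast
    ultimately show ?thesis by simp
  qed
  have two2: "card e = 2" if eF: "e \<in> F2" for e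
  proof -
    obtain a b where "e = {a,b}" "R2 a b" using F2(2) eF by blast
    moreover have "a \<noteq> b" using irr2 \<open>R2 a b\<close> by blast
    ultimately show ?thesis by simp
  qed
  have p1: "\<exists>c\<in>e. \<forall>e'\<in>F1. c \<in> e' \<longrightarrow> e' = e" if "e \<in> F1" for e using F1(4) that by blast
  have p2: "\<exists>c\<in>e. \<forall>e'\<in>F2. c \<in> e' \<longrightarrow> e' = e" if "e \<in> F2" for e using F2(4) that by blast
  obtain W where W: "W \<subseteq> C" "card C \<le> 3 * card W" "\<forall>e\<in>F1 \<union> F2. \<not> e \<subseteq> W"
    using indep[OF fin two1 p1 two2 p2, of C] by blast
  show ?thesis
  proof (rule exI[of _ W], intro conjI ballI)
    show "W \<subseteq> C" "card C \<le> 3 * card W" using W by auto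
  next
    fix w assume "w \<in> W"
    then obtain e where "e \<in> F1" "w \<in> e" using F1(3) W(1) by blast
    then obtain a b where "e = {a,b}" "R1 a b" using F1(2) by blast
    then obtain x where "R1 w x" "e = {w,x}" using \<open>w \<in> e\<close> sym1 by auto
    moreover have "x \<notin> W" using W(3) \<open>e \<in> F1\<close> \<open>w \<in> W\<close> \<open>e = {w,x}\<close> by auto
    ultimately show "\<exists>x. R1 w x \<and> x \<notin> W" by blast
  next
    fix w assume "w \<in> W"
    then obtain e where "e \<in> F2" "w \<in> e" using F2(3) W(1) by blast
    then obtain a b where "e = {a,b}" "R2 a b" using F2(2) by blast
    then obtain x where "R2 w x" "e = {w,x}" using \<open>w \<in> e\<close> sym2 by auto
    moreover have "x \<notin> W" using W(3) \<open>e \<in> F2\<close> \<open>w \<in> W\<close> \<open>e = {w,x}\<close> by auto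
    ultimately show "\<exists>x. R2 w x \<and> x \<notin> W" by blast
  qed
qed



definition goodv :: "nat set set \<Rightarrow> nat \<Rightarrow> nat \<Rightarrow> nat \<Rightarrow> bool" where
  "goodv E u v w \<longleftrightarrow> w \<noteq> u \<and> w \<noteq> v \<and> (\<exists>e\<in>E. u \<in> e \<and> w \<in> e \<and> v \<notin> e)
      \<and> (\<exists>e\<in>E. v \<in> e \<and> w \<in> e \<and> u \<notin> e)"

lemma card3_distinct:
  assumes "card {a,b,c} = 3" shows "a \<noteq> b" "a \<noteq> c" "b \<noteq> c"
  using assms by (auto simp: card_insert_if split: if_splits)

lemma third_elem:
  assumes "card e = 3" "u \<in> e" "w \<in> e" "u \<noteq> w"
  shows "\<exists>x. e = {u,w,x}"
proof -
  have fin: "finite e" using assms(1) by (metis card.infinite zero_neq_numeral)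
  have "card (e - {u,w}) = 1" using assms fin by (simp add: card_Diff_subset)
  then obtain x where "e - {u,w} = {x}" by (rule card_1_singletonE)
  then have "e = {u,w,x}" using assms(2,3) by blast
  then show ?thesis by blast
qed

lemma trace_from_W:
  fixes E :: "nat set set" and R1 R2 :: "nat \<Rightarrow> nat \<Rightarrow> bool"
  assumes uni: "uniform3 n E" and uv: "u \<noteq> v" "u < n" "v < n"
    and Wg: "\<And>w. w \<in> W \<Longrightarrow> goodv E u v w" and Wn: "W \<subseteq> {0..<n}"
    and cW: "card W = t" and finW: "finite W"
    and R1: "\<And>w x. R1 w x \<longleftrightarrow> {u,w,x} \<in> E \<and> v \<notin> {u,w,x}"
    and R2: "\<And>w x. R2 w x \<longleftrightarrow> {v,w,x} \<in> E \<and> u \<notin> {v,w,x}"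
    and X: "\<forall>w\<in>W. \<exists>x. R1 w x \<and> x \<notin> W" and Y: "\<forall>w\<in>W. \<exists>x. R2 w x \<and> x \<notin> W"
  shows "contains_trace {0..<n} E (K2t_vertices t) (K2t_edges t)"
proof -
  obtain h where h: "bij_betw h {0..<t} W" using ex_bij_betw_nat_finite[OF finW] cW by blast
  have hW: "j < t \<Longrightarrow> h j \<in> W" for j using h by (auto simp: bij_betw_def)
  have hinj: "j < t \<Longrightarrow> j' < t \<Longrightarrow> h j = h j' \<Longrightarrow> j = j'" for j j'
    using h by (auto simp: bij_betw_def inj_on_def)
  have himg: "h ` {0..<t} = W" using h by (auto simp: bij_betw_def)
  define xf where "xf w = (SOME x. R1 w x \<and> x \<notin> W)" for w
  define yf where "yf w = (SOME x. R2 w x \<and> x \<notin> W)" for w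
  have xf: "R1 w (xf w) \<and> xf w \<notin> W" if "w \<in> W" for w
    unfolding xf_def using X that by (metis (no_types, lifting) someI_ex)
  have yf: "R2 w (yf w) \<and> yf w \<notin> W" if "w \<in> W" for w
    unfolding yf_def using Y that by (metis (no_types, lifting) someI_ex)
  have card3: "card e = 3" if "e \<in> E" for e using uni that by (auto simp: uniform3_def)
  have Wuv: "w \<noteq> u" "w \<noteq> v" if "w \<in> W" for w using Wg[OF that] by (auto simp: goodv_def)
  have xfp: "{u, w, xf w} \<in> E" "v \<noteq> xf w" "u \<noteq> xf w" "w \<noteq> xf w" "xf w \<notin> W" if "w \<in> W" for w
  proof -
    show e: "{u, w, xf w} \<in> E" "v \<noteq> xf w" "xf w \<notin> W" using xf[OF that] R1 by auto
    have c: "card {u, w, xf w} = 3" using card3[OF e(1)] .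
    show "u \<noteq> xf w" by (rule card3_distinct(2)[OF c])
    show "w \<noteq> xf w" by (rule card3_distinct(3)[OF c])
  qed
  have yfp: "{v, w, yf w} \<in> E" "u \<noteq> yf w" "v \<noteq> yf w" "w \<noteq> yf w" "yf w \<notin> W" if "w \<in> W" for w
  proof -
    show e: "{v, w, yf w} \<in> E" "u \<noteq> yf w" "yf w \<notin> W" using yf[OF that] R2 by auto
    have c: "card {v, w, yf w} = 3" using card3[OF e(1)] .
    show "v \<noteq> yf w" by (rule card3_distinct(2)[OF c])
    show "w \<noteq> yf w" by (rule card3_distinct(3)[OF c])
  qed
  define phi :: "nat + nat \<Rightarrow> nat" where "phi = case_sum (\<lambda>i. if i = 0 then u else v) h"
  define psi :: "(nat + nat) set \<Rightarrow> nat set" where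
    "psi e = (let j = (THE j. Inr j \<in> e) in if Inl 0 \<in> e then {u, h j, xf (h j)} else {v, h j, yf (h j)})" for e
  have theJ: "(THE j'. Inr j' \<in> {Inl i, Inr j}) = j" for i j :: nat
    by (rule the_equality) auto
  have psi_eq: "psi {Inl i, Inr j} = (if i = 0 then {u, h j, xf (h j)} else {v, h j, yf (h j)})" for i j
    unfolding psi_def Let_def theJ by simp
  have VF: "K2t_vertices t = {Inl 0, Inl 1} \<union> Inr ` {0..<t}"
    unfolding K2t_vertices_def by (auto simp: atLeast0_lessThan_Suc)
  have phiV: "phi ` K2t_vertices t = {u, v} \<union> W"
    unfolding VF image_Un using himg by (auto simp: phi_def image_image)
  have EF: "e \<in> K2t_edges t \<longleftrightarrow> (\<exists>i j. e = {Inl i, Inr j} \<and> i < 2 \<and> j < t)" for e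
    unfolding K2t_edges_def by auto
  show ?thesis
    unfolding contains_trace_def
  proof (intro exI[of _ phi] exI[of _ psi] conjI ballI)
    show "inj_on phi (K2t_vertices t)"
    proof (rule inj_onI)
      fix a b assume a: "a \<in> K2t_vertices t" and b: "b \<in> K2t_vertices t" and ab: "phi a = phi b"
      show "a = b"
      proof (cases a)
        case (Inl i)
        then have i: "i = 0 \<or> i = 1" using a VF by auto
        show ?thesis
        proof (cases b)
          case (Inl i')
          then have "i' = 0 \<or> i' = 1" using b VF by auto
          then show ?thesis using i ab \<open>a = Inl i\<close> Inl uv(1) by (auto simp: phi_def)
        next
          case (Inr j')
          then have "j' < t" using b VF by auto
          then have "h j' \<in> W" by (rule hW)
          then show ?thesis using i ab \<open>a = Inl i\<close> Inr Wuv[OF \<open>h j' \<in> W\<close>] by (auto simp: phi_def)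
        qed
      next
        case (Inr j)
        then have "j < t" using a VF by auto
        then have hj: "h j \<in> W" by (rule hW)
        show ?thesis
        proof (cases b)
          case (Inl i')
          then have "i' = 0 \<or> i' = 1" using b VF by auto
          then show ?thesis using hj ab \<open>a = Inr j\<close> Inl Wuv[OF hj] by (auto simp: phi_def)
        next
          case (Inr j')
          then have "j' < t" using b VF by auto
          then show ?thesis using hinj[of j j'] \<open>j < t\<close> ab \<open>a = Inr j\<close> Inr by (auto simp: phi_def)
        qed
      qed
    qed
  next
    show "phi ` K2t_vertices t \<subseteq> {0..<n}" unfolding phiV using uv Wn by auto
  next
    show "inj_on psi (K2t_edges t)"
    proof (rule inj_onI)
      fix e1 e2 assume e1: "e1 \<in> K2t_edges t" and e2: "e2 \<in> K2t_edges t" and eq: "psi e1 = psi e2"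
      obtain i j where ij: "e1 = {Inl i, Inr j}" "i < 2" "j < t" using e1 unfolding EF by blast
      obtain i' j' where ij': "e2 = {Inl i', Inr j'}" "i' < 2" "j' < t" using e2 unfolding EF by blast
      have hj: "h j \<in> W" using hW ij(3) .
      have hj': "h j' \<in> W" using hW ij'(3) .
      note eq' = eq[unfolded ij(1) ij'(1) psi_eq]
      have "i = i' \<and> j = j'"
      proof (cases "i = 0")
        case True
        show ?thesis
        proof (cases "i' = 0")
          case True
          then have "{u, h j, xf (h j)} = {u, h j', xf (h j')}" using eq' \<open>i = 0\<close> by simp
          then have "h j \<in> {u, h j', xf (h j')}" by blast
          then have "h j = h j'" using Wuv[OF hj] xfp(5)[OF hj'] hj by auto
          then show ?thesis using hinj ij ij' \<open>i = 0\<close> True by blast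
        next
          case False
          then have "{u, h j, xf (h j)} = {v, h j', yf (h j')}" using eq' \<open>i = 0\<close> by simp
          then have "u \<in> {v, h j', yf (h j')}" by blast
          then show ?thesis using uv(1) Wuv[OF hj'] yfp(2)[OF hj'] by auto
        qed
      next
        case False
        show ?thesis
        proof (cases "i' = 0")
          case True
          then have "{v, h j, yf (h j)} = {u, h j', xf (h j')}" using eq' \<open>i \<noteq> 0\<close> by simp
          then have "u \<in> {v, h j, yf (h j)}" by blast
          then show ?thesis using uv(1) Wuv[OF hj] yfp(2)[OF hj] by auto
        next
          case False
          then have "{v, h j, yf (h j)} = {v, h j', yf (h j')}" using eq' \<open>i \<noteq> 0\<close> by simp
          then have "h j \<in> {v, h j', yf (h j')}" by blast
          then have "h j = h j'" using Wuv[OF hj] yfp(5)[OF hj'] hj by auto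
          then show ?thesis using hinj ij ij' \<open>i \<noteq> 0\<close> False by auto
        qed
      qed
      then show "e1 = e2" using ij ij' by simp
    qed
  next
    show "psi ` K2t_edges t \<subseteq> E"
    proof
      fix f assume "f \<in> psi ` K2t_edges t"
      then obtain e where e: "e \<in> K2t_edges t" "f = psi e" by (rule imageE)
      obtain i j where ij0: "e = {Inl i, Inr j}" "i < 2" "j < t" using e(1) unfolding EF by blast
      have ij: "f = psi {Inl i, Inr j}" "i < 2" "j < t" using ij0 e(2) by auto
      have hj: "h j \<in> W" using hW ij(3) .
      show "f \<in> E" using ij(1) psi_eq xfp(1)[OF hj] yfp(1)[OF hj] by simp
    qed
  next
    fix e assume "e \<in> K2t_edges t"
    then obtain i j where ij: "e = {Inl i, Inr j}" "i < 2" "j < t" unfolding EF by blast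
    have hj: "h j \<in> W" using hW ij(3) .
    have phie: "phi ` e = {if i = 0 then u else v, h j}" using ij(1) by (simp add: phi_def)
    show "psi e \<inter> phi ` K2t_vertices t = phi ` e"
      unfolding phiV phie ij(1) psi_eq
      using hj xfp[OF hj] yfp[OF hj] uv(1) by (auto simp: phi_def)
  qed
qed



definition adj :: "nat set set \<Rightarrow> nat \<Rightarrow> nat \<Rightarrow> bool" where
  "adj E u w \<longleftrightarrow> u \<noteq> w \<and> (\<exists>e\<in>E. u \<in> e \<and> w \<in> e)"

definition Nb :: "nat set set \<Rightarrow> nat \<Rightarrow> nat \<Rightarrow> nat set" where
  "Nb E n w = {u\<in>{0..<n}. adj E u w}"

definition Cs :: "nat set set \<Rightarrow> nat \<Rightarrow> nat \<Rightarrow> nat \<Rightarrow> nat set" where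
  "Cs E n u v = {w\<in>{0..<n}. goodv E u v w}"

lemma four_in_three:
  assumes "card e = 3" "a \<in> e" "b \<in> e" "c \<in> e" "d \<in> e"
    "a \<noteq> b" "a \<noteq> c" "a \<noteq> d" "b \<noteq> c" "b \<noteq> d"
  shows "c = d"
proof (rule ccontr)
  assume "c \<noteq> d"
  then have "card {a,b,c,d} = 4" using assms by simp
  moreover have "card {a,b,c,d} \<le> card e"
    using assms by (intro card_mono) (auto intro: card_ge_0_finite)
  ultimately show False using assms(1) by simp
qed

lemma Cs_bound:
  assumes uni: "uniform3 n E" and nt: "\<not> contains_trace {0..<n} E (K2t_vertices t) (K2t_edges t)"
    and uv: "u \<noteq> v" "u < n" "v < n"
  shows "card (Cs E n u v) \<le> 3 * t - 3"
proof (rule ccontr)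
  assume H: "\<not> ?thesis"
  define C where "C = Cs E n u v"
  have finC: "finite C" unfolding C_def Cs_def by simp
  define R1 where "R1 w x \<longleftrightarrow> {u,w,x} \<in> E \<and> v \<notin> {u,w,x}" for w x
  define R2 where "R2 w x \<longleftrightarrow> {v,w,x} \<in> E \<and> u \<notin> {v,w,x}" for w x
  have card3: "card e = 3" if "e \<in> E" for e using uni that by (auto simp: uniform3_def)
  have sym1: "R1 b a" if "R1 a b" for a b using that unfolding R1_def by (simp add: insert_commute)
  have sym2: "R2 b a" if "R2 a b" for a b using that unfolding R2_def by (simp add: insert_commute)
  have irr1: "\<not> R1 a a" for a
  proof
    assume "R1 a a"
    then have "card {u,a,a} = 3" using card3 unfolding R1_def by blast
    moreover have "card {u,a,a} \<le> 2" by (simp add: card_insert_if)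
    ultimately show False by simp
  qed
  have irr2: "\<not> R2 a a" for a
  proof
    assume "R2 a a"
    then have "card {v,a,a} = 3" using card3 unfolding R2_def by blast
    moreover have "card {v,a,a} \<le> 2" by (simp add: card_insert_if)
    ultimately show False by simp
  qed
  have nb1: "\<exists>x. R1 c x" if "c \<in> C" for c
  proof -
    have g: "goodv E u v c" using that unfolding C_def Cs_def by simp
    then obtain e where e: "e \<in> E" "u \<in> e" "c \<in> e" "v \<notin> e" "c \<noteq> u" unfolding goodv_def by blast
    obtain x where "e = {u,c,x}" using third_elem[OF card3[OF e(1)] e(2) e(3)] e(5) by metis
    then have "R1 c x" using e unfolding R1_def by simp
    then show ?thesis by blast
  qed
  have nb2: "\<exists>x. R2 c x" if "c \<in> C" for c
  proof -
    have g: "goodv E u v c" using that unfolding C_def Cs_def by simp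
    then obtain e where e: "e \<in> E" "v \<in> e" "c \<in> e" "u \<notin> e" "c \<noteq> v" unfolding goodv_def by blast
    obtain x where "e = {v,c,x}" using third_elem[OF card3[OF e(1)] e(2) e(3)] e(5) by metis
    then have "R2 c x" using e unfolding R2_def by simp
    then show ?thesis by blast
  qed
  obtain W0 where W0: "W0 \<subseteq> C" "card C \<le> 3 * card W0" "\<forall>w\<in>W0. \<exists>x. R1 w x \<and> x \<notin> W0"
    "\<forall>w\<in>W0. \<exists>x. R2 w x \<and> x \<notin> W0"
    using select[of C R1 R2, OF finC sym1 irr1 nb1 sym2 irr2 nb2] by blast
  have "t \<le> card W0" using H W0(2) unfolding C_def by linarith
  then obtain W where W: "W \<subseteq> W0" "card W = t"
    by (meson obtain_subset_with_card_n)
  have finW0: "finite W0" using W0(1) finC finite_subset by blast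
  have finW: "finite W" using W(1) finW0 finite_subset by blast
  have "contains_trace {0..<n} E (K2t_vertices t) (K2t_edges t)"
  proof (rule trace_from_W[OF uni uv, of W t R1 R2])
    show "goodv E u v w" if "w \<in> W" for w using that W(1) W0(1) unfolding C_def Cs_def by blast
    show "W \<subseteq> {0..<n}" using W(1) W0(1) unfolding C_def Cs_def by blast
    show "card W = t" by (fact W(2))
    show "finite W" by (fact finW)
    show "R1 w x \<longleftrightarrow> {u,w,x} \<in> E \<and> v \<notin> {u,w,x}" for w x by (fact R1_def)
    show "R2 w x \<longleftrightarrow> {v,w,x} \<in> E \<and> u \<notin> {v,w,x}" for w x by (fact R2_def)
    show "\<forall>w\<in>W. \<exists>x. R1 w x \<and> x \<notin> W" using W0(3) W(1) by blast
    show "\<forall>w\<in>W. \<exists>x. R2 w x \<and> x \<notin> W" using W0(4) W(1) by blast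
  qed
  then show False using nt by simp
qed



lemma local_count:
  assumes uni: "uniform3 n E"
    and Q: "Q \<subseteq> {p \<in> Nb E n w \<times> Nb E n w. fst p \<noteq> snd p}"
  shows "card Q \<le> 2 * card (Nb E n w) + card {p\<in>Q. goodv E (fst p) (snd p) w}"
proof -
  define N where "N = Nb E n w"
  have finN: "finite N" unfolding N_def Nb_def by simp
  have finQ: "finite Q" by (rule finite_subset[OF Q]) (simp add: finN[unfolded N_def])
  have card3: "card e = 3" if "e \<in> E" for e using uni that by (auto simp: uniform3_def)
  have Nadj: "a \<in> N \<Longrightarrow> a \<noteq> w \<and> (\<exists>e\<in>E. a \<in> e \<and> w \<in> e)" for a
    unfolding N_def Nb_def adj_def by auto
  define B1 where "B1 = {p\<in>Q. \<not>(\<exists>e\<in>E. fst p \<in> e \<and> w \<in> e \<and> snd p \<notin> e)}"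
  define B2 where "B2 = {p\<in>Q. \<not>(\<exists>e\<in>E. snd p \<in> e \<and> w \<in> e \<and> fst p \<notin> e)}"
  have sub: "Q \<subseteq> {p\<in>Q. goodv E (fst p) (snd p) w} \<union> B1 \<union> B2"
  proof
    fix p assume pQ: "p \<in> Q"
    have "fst p \<in> N" "snd p \<in> N" using pQ Q unfolding N_def by auto
    then have "w \<noteq> fst p" "w \<noteq> snd p" using Nadj by auto
    then show "p \<in> {p\<in>Q. goodv E (fst p) (snd p) w} \<union> B1 \<union> B2"
      using pQ unfolding B1_def B2_def goodv_def by auto
  qed
  have cB1: "card B1 \<le> card N"
  proof (rule card_inj_on_le[of fst])
    show "inj_on fst B1"
    proof (rule inj_onI)
      fix p q assume p: "p \<in> B1" and q: "q \<in> B1" and eq: "fst p = fst q"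
      have pQ: "p \<in> Q" and qQ: "q \<in> Q" using p q unfolding B1_def by auto
      have N: "fst p \<in> N" "snd p \<in> N" "snd q \<in> N" using pQ qQ Q unfolding N_def by auto
      have d: "fst p \<noteq> snd p" "fst q \<noteq> snd q" using pQ qQ Q by auto
      obtain e where e: "e \<in> E" "fst p \<in> e" "w \<in> e" using Nadj[OF N(1)] by blast
      have "snd p \<in> e" using p e unfolding B1_def by blast
      moreover have "snd q \<in> e" using q e eq unfolding B1_def by auto
      ultimately have "snd p = snd q"
        using four_in_three[OF card3[OF e(1)] e(2) e(3)] Nadj[OF N(1)] Nadj[OF N(2)] Nadj[OF N(3)] d eq
        by metis
      then show "p = q" using eq by (simp add: prod_eq_iff)
    qed
    show "fst ` B1 \<subseteq> N" using Q unfolding B1_def N_def by auto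
    show "finite N" by (fact finN)
  qed
  have cB2: "card B2 \<le> card N"
  proof (rule card_inj_on_le[of snd])
    show "inj_on snd B2"
    proof (rule inj_onI)
      fix p q assume p: "p \<in> B2" and q: "q \<in> B2" and eq: "snd p = snd q"
      have pQ: "p \<in> Q" and qQ: "q \<in> Q" using p q unfolding B2_def by auto
      have N: "snd p \<in> N" "fst p \<in> N" "fst q \<in> N" using pQ qQ Q unfolding N_def by auto
      have d: "fst p \<noteq> snd p" "fst q \<noteq> snd q" using pQ qQ Q by auto
      obtain e where e: "e \<in> E" "snd p \<in> e" "w \<in> e" using Nadj[OF N(1)] by blast
      have "fst p \<in> e" using p e unfolding B2_def by blast
      moreover have "fst q \<in> e" using q e eq unfolding B2_def by auto
      ultimately have "fst p = fst q"
        using four_in_three[OF card3[OF e(1)] e(2) e(3)] Nadj[OF N(1)] Nadj[OF N(2)] Nadj[OF N(3)] d eq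
        by metis
      then show "p = q" using eq by (simp add: prod_eq_iff)
    qed
    show "snd ` B2 \<subseteq> N" using Q unfolding B2_def N_def by auto
    show "finite N" by (fact finN)
  qed
  have "card Q \<le> card ({p\<in>Q. goodv E (fst p) (snd p) w} \<union> B1 \<union> B2)"
    by (rule card_mono[OF _ sub]) (use finQ in \<open>auto simp: B1_def B2_def\<close>)
  also have "\<dots> \<le> card {p\<in>Q. goodv E (fst p) (snd p) w} + card B1 + card B2"
    by (meson card_Un_le add_le_mono1 le_trans)
  finally show ?thesis using cB1 cB2 unfolding N_def by linarith
qed

definition Gs :: "nat set set \<Rightarrow> nat \<Rightarrow> nat \<Rightarrow> (nat \<times> nat) set" where
  "Gs E n w = {p\<in>{0..<n}\<times>{0..<n}. fst p \<noteq> snd p \<and> goodv E (fst p) (snd p) w}"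

definition GLs :: "nat set set \<Rightarrow> nat \<Rightarrow> nat \<Rightarrow> (nat \<times> nat) set" where
  "GLs E n w = {p\<in>{0..<n}\<times>{0..<n}. fst p \<noteq> snd p \<and> goodv E (fst p) (snd p) w \<and> {fst p, snd p, w} \<in> E}"

definition Lk :: "nat set set \<Rightarrow> nat \<Rightarrow> nat \<Rightarrow> (nat \<times> nat) set" where
  "Lk E n w = {p\<in>{0..<n}\<times>{0..<n}. fst p \<noteq> snd p \<and> fst p \<noteq> w \<and> snd p \<noteq> w \<and> {fst p, snd p, w} \<in> E}"

lemma deg_sq:
  assumes uni: "uniform3 n E"
  shows "card (Nb E n w) * card (Nb E n w) \<le> 3 * card (Nb E n w) + card (Gs E n w)"
proof -
  define N where "N = Nb E n w"
  have finN: "finite N" unfolding N_def Nb_def by simp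
  define P where "P = {p \<in> N \<times> N. fst p \<noteq> snd p}"
  have "N \<times> N \<subseteq> P \<union> (\<lambda>x. (x,x)) ` N" unfolding P_def by auto
  then have "card (N \<times> N) \<le> card (P \<union> (\<lambda>x. (x,x)) ` N)"
    by (intro card_mono) (auto simp: P_def finN)
  also have "\<dots> \<le> card P + card ((\<lambda>x. (x,x)) ` N)" by (rule card_Un_le)
  also have "card ((\<lambda>x. (x,x)) ` N) \<le> card N" by (rule card_image_le[OF finN])
  finally have 1: "card N * card N \<le> card P + card N" by (simp add: card_cartesian_product)
  have 2: "card P \<le> 2 * card N + card {p\<in>P. goodv E (fst p) (snd p) w}"
    using local_count[OF uni, of P w] unfolding P_def N_def by simp
  have "{p\<in>P. goodv E (fst p) (snd p) w} \<subseteq> Gs E n w"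
    unfolding P_def Gs_def N_def Nb_def by auto
  then have 3: "card {p\<in>P. goodv E (fst p) (snd p) w} \<le> card (Gs E n w)"
    by (intro card_mono) (auto simp: Gs_def)
  show ?thesis using 1 2 3 unfolding N_def by linarith
qed

lemma link_le:
  assumes uni: "uniform3 n E"
  shows "card (Lk E n w) \<le> 2 * card (Nb E n w) + card (GLs E n w)"
proof -
  have sub: "Lk E n w \<subseteq> {p \<in> Nb E n w \<times> Nb E n w. fst p \<noteq> snd p}"
  proof
    fix p assume p: "p \<in> Lk E n w"
    then have "{fst p, snd p, w} \<in> E" "fst p < n" "snd p < n" "fst p \<noteq> w" "snd p \<noteq> w" "fst p \<noteq> snd p"
      unfolding Lk_def by auto
    moreover have "\<exists>e\<in>E. fst p \<in> e \<and> w \<in> e"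
      by (rule bexI[of _ "{fst p, snd p, w}"]) (simp_all add: \<open>{fst p, snd p, w} \<in> E\<close>)
    moreover have "\<exists>e\<in>E. snd p \<in> e \<and> w \<in> e"
      by (rule bexI[of _ "{fst p, snd p, w}"]) (simp_all add: \<open>{fst p, snd p, w} \<in> E\<close>)
    ultimately show "p \<in> {p \<in> Nb E n w \<times> Nb E n w. fst p \<noteq> snd p}"
      unfolding Nb_def adj_def mem_Times_iff by auto
  qed
  have 1: "card (Lk E n w) \<le> 2 * card (Nb E n w) + card {p\<in>Lk E n w. goodv E (fst p) (snd p) w}"
    by (rule local_count[OF uni sub])
  have "{p\<in>Lk E n w. goodv E (fst p) (snd p) w} \<subseteq> GLs E n w" unfolding Lk_def GLs_def by auto
  then have "card {p\<in>Lk E n w. goodv E (fst p) (snd p) w} \<le> card (GLs E n w)"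
    by (intro card_mono) (auto simp: GLs_def)
  then show ?thesis using 1 by linarith
qed

lemma deg_link:
  assumes uni: "uniform3 n E"
  shows "2 * card {e\<in>E. w \<in> e} \<le> card (Lk E n w)"
proof -
  have card3: "card e = 3" if "e \<in> E" for e using uni that by (auto simp: uniform3_def)
  have subV: "e \<subseteq> {0..<n}" if "e \<in> E" for e using uni that by (auto simp: uniform3_def)
  have finE: "finite E"
    by (rule finite_subset[of _ "Pow {0..<n}"]) (use subV in auto)
  define A where "A e = {p \<in> {0..<n}\<times>{0..<n}. fst p \<noteq> snd p \<and> fst p \<in> e \<and> snd p \<in> e \<and> fst p \<noteq> w \<and> snd p \<noteq> w}" for e
  define I where "I = {e\<in>E. w \<in> e}"
  have finI: "finite I" unfolding I_def using finE by simp
  have cA: "card (A e) = 2" if "e \<in> I" for e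
  proof -
    have eE: "e \<in> E" and we: "w \<in> e" using that unfolding I_def by auto
    have fine: "finite e" using card3[OF eE] by (metis card.infinite zero_neq_numeral)
    have "card (e - {w}) = 2" using card3[OF eE] we fine by simp
    then obtain a b where ab: "e - {w} = {a,b}" "a \<noteq> b" by (meson card_2_iff)
    have abw: "a \<noteq> w" "b \<noteq> w" "a \<in> e" "b \<in> e" using ab by auto
    have abn: "a < n" "b < n" using subV[OF eE] abw by auto
    have "A e = {(a,b),(b,a)}"
    proof
      show "A e \<subseteq> {(a,b),(b,a)}"
      proof
        fix p assume "p \<in> A e"
        then have "fst p \<in> e - {w}" "snd p \<in> e - {w}" "fst p \<noteq> snd p" unfolding A_def by auto
        then have "fst p \<in> {a,b}" "snd p \<in> {a,b}" "fst p \<noteq> snd p" using ab by auto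
        then show "p \<in> {(a,b),(b,a)}" by (cases p) auto
      qed
      show "{(a,b),(b,a)} \<subseteq> A e" unfolding A_def using abw abn ab(2) by auto
    qed
    then show ?thesis using ab(2) by simp
  qed
  have "(\<Sum>e\<in>I. card (A e)) = card (\<Union>e\<in>I. A e)"
  proof (rule card_UN_disjoint[symmetric])
    show "finite I" by (fact finI)
    show "\<forall>e\<in>I. finite (A e)" unfolding A_def by simp
    show "\<forall>e\<in>I. \<forall>e'\<in>I. e \<noteq> e' \<longrightarrow> A e \<inter> A e' = {}"
    proof (intro ballI impI)
      fix e e' assume e: "e \<in> I" and e': "e' \<in> I" and ne: "e \<noteq> e'"
      show "A e \<inter> A e' = {}"
      proof (rule ccontr)
        assume "A e \<inter> A e' \<noteq> {}"
        then obtain p where p: "p \<in> A e" "p \<in> A e'" by blast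
        have eE: "e \<in> E" "e' \<in> E" "w \<in> e" "w \<in> e'" using e e' unfolding I_def by auto
        have sub: "{fst p, snd p, w} \<subseteq> e" "{fst p, snd p, w} \<subseteq> e'" using p eE unfolding A_def by auto
        have c: "card {fst p, snd p, w} = 3" using p unfolding A_def by auto
        have "e = {fst p, snd p, w}"
          using card_subset_eq[OF _ sub(1)] card3[OF eE(1)] c card.infinite by fastforce
        moreover have "e' = {fst p, snd p, w}"
          using card_subset_eq[OF _ sub(2)] card3[OF eE(2)] c card.infinite by fastforce
        ultimately show False using ne by simp
      qed
    qed
  qed
  moreover have "(\<Union>e\<in>I. A e) \<subseteq> Lk E n w"
  proof
    fix p assume "p \<in> (\<Union>e\<in>I. A e)"
    then obtain e where e: "e \<in> I" "p \<in> A e" by blast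
    have eE: "e \<in> E" "w \<in> e" using e unfolding I_def by auto
    have sub: "{fst p, snd p, w} \<subseteq> e" using e eE unfolding A_def by auto
    have c: "card {fst p, snd p, w} = 3" using e unfolding A_def by auto
    have "e = {fst p, snd p, w}"
      using card_subset_eq[OF _ sub] card3[OF eE(1)] c card.infinite by fastforce
    then show "p \<in> Lk E n w" using e eE unfolding A_def Lk_def by auto
  qed
  then have "card (\<Union>e\<in>I. A e) \<le> card (Lk E n w)" by (intro card_mono) (auto simp: Lk_def)
  moreover have "(\<Sum>e\<in>I. card (A e)) = (\<Sum>e\<in>I. 2)" by (rule sum.cong[OF refl]) (rule cA)
  ultimately have "(\<Sum>e\<in>I. (2::nat)) \<le> card (Lk E n w)" by linarith
  moreover have "(\<Sum>e\<in>I. (2::nat)) = 2 * card I" by (simp add: mult.commute)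
  ultimately have "2 * card I \<le> card (Lk E n w)" by linarith
  then show ?thesis by (simp only: I_def)
qed



lemma adj_sym: "adj E u v \<longleftrightarrow> adj E v u" unfolding adj_def by blast

lemma sum_bounds:
  assumes uni: "uniform3 n E" and nt: "\<not> contains_trace {0..<n} E (K2t_vertices t) (K2t_edges t)"
    and t1: "t \<ge> 1"
  shows "(\<Sum>w\<in>{0..<n}. card (Nb E n w) * card (Nb E n w))
           \<le> 3 * (\<Sum>w\<in>{0..<n}. card (Nb E n w)) + (3*t-3) * (n*n)"
    and "6 * card E \<le> (3*t-1) * (\<Sum>w\<in>{0..<n}. card (Nb E n w))"
proof -
  define V where "V = {0..<n::nat}"
  define K where "K = 3*t-3"
  define D where "D = (\<Sum>w\<in>V. card (Nb E n w))"
  have finV: "finite V" unfolding V_def by simp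
  have finVV: "finite (V \<times> V)" using finV by simp
  have subV: "e \<subseteq> V" if "e \<in> E" for e using uni that by (auto simp: uniform3_def V_def)
  have card3: "card e = 3" if "e \<in> E" for e using uni that by (auto simp: uniform3_def)
  have finE: "finite E"
    by (rule finite_subset[of _ "Pow V"]) (use subV finV in auto)
  have swapG: "(\<Sum>w\<in>V. card (Gs E n w)) = (\<Sum>p\<in>V\<times>V. card {w\<in>V. fst p \<noteq> snd p \<and> goodv E (fst p) (snd p) w})"
    unfolding Gs_def V_def[symmetric] by (rule sum_card_swap[OF finV finVV])
  have Gp: "card {w\<in>V. fst p \<noteq> snd p \<and> goodv E (fst p) (snd p) w} \<le> K" if "p \<in> V \<times> V" for p
  proof (cases "fst p = snd p")
    case True then show ?thesis by simp
  next
    case False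
    have "{w\<in>V. fst p \<noteq> snd p \<and> goodv E (fst p) (snd p) w} = Cs E n (fst p) (snd p)"
      using False unfolding Cs_def V_def by auto
    moreover have "card (Cs E n (fst p) (snd p)) \<le> K"
      unfolding K_def by (rule Cs_bound[OF uni nt False]) (use that in \<open>auto simp: V_def\<close>)
    ultimately show ?thesis by simp
  qed
  have "(\<Sum>w\<in>V. card (Nb E n w) * card (Nb E n w)) \<le> (\<Sum>w\<in>V. 3 * card (Nb E n w) + card (Gs E n w))"
    by (rule sum_mono) (rule deg_sq[OF uni])
  also have "\<dots> = 3 * D + (\<Sum>w\<in>V. card (Gs E n w))" by (simp add: sum.distrib sum_distrib_left D_def)
  also have "(\<Sum>w\<in>V. card (Gs E n w)) \<le> (\<Sum>p\<in>V\<times>V. K)" unfolding swapG by (rule sum_mono) (rule Gp)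
  also have "(\<Sum>p\<in>V\<times>V. K) = K * (n*n)" by (simp add: V_def card_cartesian_product)
  finally show "(\<Sum>w\<in>{0..<n}. card (Nb E n w) * card (Nb E n w))
           \<le> 3 * (\<Sum>w\<in>{0..<n}. card (Nb E n w)) + (3*t-3) * (n*n)" unfolding D_def V_def K_def by simp
  have swapE: "(\<Sum>w\<in>V. card {e\<in>E. w \<in> e}) = (\<Sum>e\<in>E. card {w\<in>V. w \<in> e})"
    by (rule sum_card_swap[OF finV finE])
  also have "\<dots> = (\<Sum>e\<in>E. 3)"
  proof (rule sum.cong[OF refl])
    fix e assume "e \<in> E"
    then have "{w\<in>V. w \<in> e} = e" using subV by blast
    then show "card {w\<in>V. w \<in> e} = 3" using card3[OF \<open>e \<in> E\<close>] by simp
  qed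
  finally have degsum: "(\<Sum>w\<in>V. card {e\<in>E. w \<in> e}) = 3 * card E" by simp
  have swapGL: "(\<Sum>w\<in>V. card (GLs E n w)) = (\<Sum>p\<in>V\<times>V. card {w\<in>V. fst p \<noteq> snd p \<and> goodv E (fst p) (snd p) w \<and> {fst p, snd p, w} \<in> E})"
    unfolding GLs_def V_def[symmetric] by (rule sum_card_swap[OF finV finVV])
  have GLp: "card {w\<in>V. fst p \<noteq> snd p \<and> goodv E (fst p) (snd p) w \<and> {fst p, snd p, w} \<in> E}
      \<le> (if adj E (fst p) (snd p) then K else 0)" if "p \<in> V \<times> V" for p
  proof (cases "adj E (fst p) (snd p)")
    case True
    have "{w\<in>V. fst p \<noteq> snd p \<and> goodv E (fst p) (snd p) w \<and> {fst p, snd p, w} \<in> E}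
       \<subseteq> {w\<in>V. fst p \<noteq> snd p \<and> goodv E (fst p) (snd p) w}" by auto
    then have "card {w\<in>V. fst p \<noteq> snd p \<and> goodv E (fst p) (snd p) w \<and> {fst p, snd p, w} \<in> E}
       \<le> card {w\<in>V. fst p \<noteq> snd p \<and> goodv E (fst p) (snd p) w}"
      by (intro card_mono) (simp_all add: finV)
    then show ?thesis using Gp[OF that] True by simp
  next
    case False
    have emp: "{w\<in>V. fst p \<noteq> snd p \<and> goodv E (fst p) (snd p) w \<and> {fst p, snd p, w} \<in> E} = {}"
    proof (rule ccontr)
      assume "\<not> ?thesis"
      then obtain w where w: "fst p \<noteq> snd p" "{fst p, snd p, w} \<in> E" by blast
      have "adj E (fst p) (snd p)" unfolding adj_def
        by (rule conjI[OF w(1)], rule bexI[of _ "{fst p, snd p, w}"]) (simp_all add: w(2))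
      then show False using False by simp
    qed
    show ?thesis unfolding emp using False by simp
  qed
  have adjcard: "card {p\<in>V\<times>V. adj E (fst p) (snd p)} = D"
  proof -
    have "{p\<in>V\<times>V. adj E (fst p) (snd p)} = Sigma V (\<lambda>u. {v\<in>V. adj E u v})" by auto
    then have "card {p\<in>V\<times>V. adj E (fst p) (snd p)} = (\<Sum>u\<in>V. card {v\<in>V. adj E u v})"
      using finV by (simp add: card_SigmaI)
    also have "\<dots> = D" unfolding D_def Nb_def V_def by (simp add: adj_sym)
    finally show ?thesis .
  qed
  have "6 * card E = 2 * (\<Sum>w\<in>V. card {e\<in>E. w \<in> e})" using degsum by simp
  also have "\<dots> = (\<Sum>w\<in>V. 2 * card {e\<in>E. w \<in> e})" by (simp add: sum_distrib_left)
  also have "\<dots> \<le> (\<Sum>w\<in>V. card (Lk E n w))" by (rule sum_mono) (rule deg_link[OF uni])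
  also have "\<dots> \<le> (\<Sum>w\<in>V. 2 * card (Nb E n w) + card (GLs E n w))" by (rule sum_mono) (rule link_le[OF uni])
  also have "\<dots> = 2 * D + (\<Sum>w\<in>V. card (GLs E n w))" by (simp add: sum.distrib sum_distrib_left D_def)
  also have "(\<Sum>w\<in>V. card (GLs E n w)) \<le> (\<Sum>p\<in>V\<times>V. if adj E (fst p) (snd p) then K else 0)"
    unfolding swapGL by (rule sum_mono) (rule GLp)
  also have "(\<Sum>p\<in>V\<times>V. if adj E (fst p) (snd p) then K else 0) = K * card {p\<in>V\<times>V. adj E (fst p) (snd p)}"
    by (simp add: sum.If_cases finVV Int_def)
  also have "\<dots> = K * D" using adjcard by simp
  finally have "6 * card E \<le> 2 * D + K * D" by simp
  moreover have "2 * D + K * D = (3*t-1) * D" unfolding K_def using t1 by (simp add: algebra_simps)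
  ultimately show "6 * card E \<le> (3*t-1) * (\<Sum>w\<in>{0..<n}. card (Nb E n w))" unfolding D_def V_def by simp
qed

lemma real_bound:
  fixes d :: "nat \<Rightarrow> nat" and m n K :: nat
  assumes h1: "(\<Sum>w\<in>{0..<n}. d w * d w) \<le> 3 * (\<Sum>w\<in>{0..<n}. d w) + K * (n*n)"
    and h2: "6 * m \<le> (K+2) * (\<Sum>w\<in>{0..<n}. d w)"
  shows "real m \<le> (real K + 2) / 6 * sqrt (real K) * (real n * sqrt (real n)) + (real K + 2) / 2 * real n"
proof -
  define D where "D = (\<Sum>w\<in>{0..<n}. real (d w))"
  define S where "S = (\<Sum>w\<in>{0..<n}. (real (d w))\<^sup>2)"
  have hS: "S \<le> 3 * D + real K * (real n * real n)"
  proof -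
    have "real (\<Sum>w\<in>{0..<n}. d w * d w) \<le> real (3 * (\<Sum>w\<in>{0..<n}. d w) + K * (n*n))"
      using h1 by (simp only: of_nat_le_iff)
    then show ?thesis unfolding S_def D_def by (simp add: power2_eq_square)
  qed
  have hm: "6 * real m \<le> (real K + 2) * D"
  proof -
    have "real (6 * m) \<le> real ((K+2) * (\<Sum>w\<in>{0..<n}. d w))" using h2 by (simp only: of_nat_le_iff)
    then show ?thesis unfolding D_def by (simp add: algebra_simps)
  qed
  have CS: "D\<^sup>2 \<le> S * real n"
    unfolding D_def S_def using sum_squared_le_sum_of_squares[of "\<lambda>w. real (d w)" "{0..<n}"] by simp
  have D0: "D \<ge> 0" unfolding D_def by (simp add: sum_nonneg)
  define s where "s = sqrt (real K) * (real n * sqrt (real n))"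
  have s0: "s \<ge> 0" unfolding s_def by simp
  have ss: "s * s = real K * (real n * real n * real n)"
    unfolding s_def by (simp add: algebra_simps real_sqrt_mult[symmetric] del: real_sqrt_mult)
  have Dle: "D \<le> 3 * real n + s"
  proof (rule ccontr)
    assume "\<not> ?thesis"
    then have gt: "D > 3 * real n + s" by simp
    have n0: "real n \<ge> 0" by simp
    have "D * D > D * (3 * real n + s)" using gt D0 s0 n0 by (intro mult_strict_left_mono) auto
    moreover have "D * s \<ge> s * s" using gt s0 n0 by (intro mult_right_mono) auto
    ultimately have "D * D > 3 * real n * D + s * s" by (simp add: algebra_simps)
    moreover have "D * D \<le> 3 * real n * D + real K * (real n * real n * real n)"
    proof -
      have "D * D \<le> S * real n" using CS by (simp add: power2_eq_square)
      also have "\<dots> \<le> (3 * D + real K * (real n * real n)) * real n" using hS n0 by (rule mult_right_mono)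
      finally show ?thesis by (simp add: algebra_simps)
    qed
    ultimately show False using ss by simp
  qed
  have "6 * real m \<le> (real K + 2) * (3 * real n + s)"
    using hm Dle by (smt (verit) mult_left_mono of_nat_0_le_iff)
  then have "real m \<le> (real K + 2) * (3 * real n + s) / 6" by simp
  also have "\<dots> = (real K + 2) / 6 * sqrt (real K) * (real n * sqrt (real n)) + (real K + 2) / 2 * real n"
    unfolding s_def by (simp add: field_simps)
  finally show ?thesis .
qed



lemma card_bound:
  assumes uni: "uniform3 n E" and nt: "\<not> contains_trace {0..<n} E (K2t_vertices t) (K2t_edges t)"
    and t1: "t \<ge> 1"
  shows "real (card E) \<le> (real (3*t-3) + 2) / 6 * sqrt (real (3*t-3)) * (real n * sqrt (real n))
            + (real (3*t-3) + 2) / 2 * real n"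
proof (rule real_bound[where n=n and d="\<lambda>w. card (Nb E n w)" and K="3*t-3" and m="card E"])
  show "(\<Sum>w\<in>{0..<n}. card (Nb E n w) * card (Nb E n w))
           \<le> 3 * (\<Sum>w\<in>{0..<n}. card (Nb E n w)) + (3*t-3) * (n*n)"
    by (rule sum_bounds(1)[OF uni nt t1])
  have "3*t-3+2 = 3*t-1" using t1 by simp
  then show "6 * card E \<le> (3*t-3+2) * (\<Sum>w\<in>{0..<n}. card (Nb E n w))"
    using sum_bounds(2)[OF uni nt t1] by simp
qed

lemma ex3_bound:
  assumes t1: "t \<ge> 1"
  shows "real (ex3_trace n (K2t_vertices t) (K2t_edges t))
    \<le> (real (3*t-3) + 2) / 6 * sqrt (real (3*t-3)) * (real n * sqrt (real n))
            + (real (3*t-3) + 2) / 2 * real n"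
proof -
  define S where "S = {card E | E. uniform3 n E \<and> \<not> contains_trace {0..<n} E (K2t_vertices t) (K2t_edges t)}"
  have "S \<subseteq> card ` Pow (Pow {0..<n})" unfolding S_def uniform3_def by auto
  then have finS: "finite S" by (rule finite_subset) simp
  have "{Inl 0, Inr 0} \<in> K2t_edges t" unfolding K2t_edges_def using t1 by (intro CollectI exI[of _ 0] conjI) auto
  then have "\<not> contains_trace {0..<n} ({}::nat set set) (K2t_vertices t) (K2t_edges t)"
    unfolding contains_trace_def by blast
  moreover have "uniform3 n ({}::nat set set)" by (simp add: uniform3_def)
  ultimately have "card ({}::nat set set) \<in> S" unfolding S_def by blast
  then have "S \<noteq> {}" by blast
  then have "Max S \<in> S" using finS by (rule Max_in[rotated])
  then obtain E where E: "uniform3 n E" "\<not> contains_trace {0..<n} E (K2t_vertices t) (K2t_edges t)"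
    "Max S = card E" unfolding S_def by blast
  have "ex3_trace n (K2t_vertices t) (K2t_edges t) = card E" using E(3) unfolding ex3_trace_def S_def by simp
  then show ?thesis using card_bound[OF E(1) E(2) t1] by simp
qed

lemma const_ineq:
  fixes t :: nat
  assumes t3: "t \<ge> 3"
  shows "(real (3*t-3) + 2) / 6 * sqrt (real (3*t-3))
     \<le> sqrt (3 * (3 * real t - 1)) * (real t - 1) / 3 + sqrt (real t - 1) / 2"
proof -
  define a where "a = real t"
  have a3: "a \<ge> 3" unfolding a_def using t3 by simp
  have r: "real (3*t-3) = 3*a - 3" unfolding a_def using t3 by (simp add: of_nat_diff)
  define L where "L = (3*a - 1) / 6 * sqrt (3*a - 3)"
  define R where "R = sqrt (3 * (3 * a - 1)) * (a - 1) / 3"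
  have L2: "L\<^sup>2 = (3*a-1)\<^sup>2 / 36 * (3*a - 3)"
    unfolding L_def using a3 by (simp add: power_mult_distrib power_divide)
  have R2: "R\<^sup>2 = 3 * (3*a-1) * (a-1)\<^sup>2 / 9"
    unfolding R_def using a3 by (simp add: power_mult_distrib power_divide)
  have "R\<^sup>2 - L\<^sup>2 = (3*a-1) * (a-1) * (3*a - 9) / 36"
    unfolding L2 R2 by (simp add: power2_eq_square field_simps)
  moreover have "(3*a-1) * (a-1) * (3*a - 9) \<ge> 0" using a3 by simp
  ultimately have "L\<^sup>2 \<le> R\<^sup>2" by simp
  moreover have "R \<ge> 0" unfolding R_def using a3 by simp
  ultimately have "L \<le> R" by (rule power2_le_imp_le)
  moreover have "sqrt (a - 1) / 2 \<ge> 0" using a3 by simp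
  ultimately have "L \<le> R + sqrt (a - 1) / 2" by linarith
  then show ?thesis unfolding L_def R_def r a_def by simp
qed

theorem mainTheorem4:
  fixes t :: nat
  assumes "t \<ge> 3"
  shows "\<forall>\<epsilon>>0. \<forall>\<^sub>F n in sequentially.
           real (ex3_trace n (K2t_vertices t) (K2t_edges t))
             \<le> (sqrt (3 * (3 * real t - 1)) * (real t - 1) / 3 + sqrt (real t - 1) / 2 + \<epsilon>)
                * real n powr (3/2)"
proof (intro allI impI)
  fix \<epsilon> :: real assume ep: "\<epsilon> > 0"
  define c where "c = sqrt (3 * (3 * real t - 1)) * (real t - 1) / 3 + sqrt (real t - 1) / 2"
  define c0 where "c0 = (real (3*t-3) + 2) / 6 * sqrt (real (3*t-3))"
  define c1 where "c1 = (real (3*t-3) + 2) / 2"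
  have t1: "t \<ge> 1" using assms by simp
  have c0c: "c0 \<le> c" unfolding c0_def c_def by (rule const_ineq[OF assms])
  have c10: "c1 \<ge> 0" unfolding c1_def by simp
  define N where "N = nat \<lceil>(c1 / \<epsilon>)\<^sup>2\<rceil> + 1"
  show "\<forall>\<^sub>F n in sequentially.
           real (ex3_trace n (K2t_vertices t) (K2t_edges t))
             \<le> (sqrt (3 * (3 * real t - 1)) * (real t - 1) / 3 + sqrt (real t - 1) / 2 + \<epsilon>)
                * real n powr (3/2)"
    unfolding c_def[symmetric]
  proof (rule eventually_sequentiallyI[of N])
    fix n assume nN: "N \<le> n"
    have n1: "real n \<ge> 1" using nN unfolding N_def by simp
    have "(c1 / \<epsilon>)\<^sup>2 \<le> real n"
    proof -
      have "(c1 / \<epsilon>)\<^sup>2 \<le> real (nat \<lceil>(c1 / \<epsilon>)\<^sup>2\<rceil>)" by linarith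
      also have "\<dots> \<le> real n" using nN unfolding N_def by simp
      finally show ?thesis .
    qed
    then have "sqrt ((c1 / \<epsilon>)\<^sup>2) \<le> sqrt (real n)" by (rule real_sqrt_le_mono)
    then have "c1 / \<epsilon> \<le> sqrt (real n)" using c10 ep by simp
    then have "c1 \<le> \<epsilon> * sqrt (real n)" using ep by (simp add: divide_le_eq mult.commute)
    then have c1n: "c1 * real n \<le> \<epsilon> * (real n * sqrt (real n))"
      using n1 by (metis mult.assoc mult.commute mult_right_mono of_nat_0_le_iff)
    have pw: "real n powr (3/2) = real n * sqrt (real n)"
    proof -
      have "real n powr (3/2) = real n powr (1 + 1/2)" by simp
      also have "\<dots> = real n powr 1 * real n powr (1/2)" by (rule powr_add)
      also have "\<dots> = real n * sqrt (real n)" by (simp add: powr_half_sqrt)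
      finally show ?thesis .
    qed
    have "real (ex3_trace n (K2t_vertices t) (K2t_edges t)) \<le> c0 * (real n * sqrt (real n)) + c1 * real n"
      using ex3_bound[OF t1, of n] unfolding c0_def c1_def by simp
    also have "\<dots> \<le> c * (real n * sqrt (real n)) + \<epsilon> * (real n * sqrt (real n))"
      using c0c c1n n1 by (intro add_mono mult_right_mono) auto
    also have "\<dots> = (c + \<epsilon>) * real n powr (3/2)" unfolding pw by (simp add: algebra_simps)
    finally show "real (ex3_trace n (K2t_vertices t) (K2t_edges t)) \<le> (c + \<epsilon>) * real n powr (3/2)" .
  qed
qed


end
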